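(* Let $p>0$, $m>0$, and let $N$ be a random variable on $\mathbb{N}_0$ with the Takacs probability mass function \[ f(n)=\mathbb{P}(N=n)=\nu(n)\Big(\frac{m(p+m)}{(p+2m)^2}\Big)^{n}\Big(\frac{p+m}{p+2m}\Big)^{p},\qquad \nu(n)=\frac{p}{n+p}\,\frac{(n+p)(n+p+1)\cdots(2n+p-1)}{n!}, \] for $n\in\mathbb{N}_0$ (with $\nu(0)=1$). Let $b(n)=\frac{1}{\sqrt{n+1}}\big(\sqrt{1+\tfrac1n}-1\big)$ for $n\ge 1$. Then there is a constant $C$ not depending on $n$ such that \[ f(n\mid n\ge 1):=\mathbb{P}(N=n\mid N\ge 1)\le C\,b(n)\qquad\text{for all } n=1,2,\ldots. \]
   Context: $b$ is the probability mass function of $\lfloor U^{-2}\rfloor$ for $U$ uniform on $(0,1)$. The constant $C$ may depend on $p$ and $m$. *)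

theory Defs
  imports Complex_Main
begin

definition takacs_nu :: "real \<Rightarrow> nat \<Rightarrow> real" where
  "takacs_nu p n = p / (real n + p) * pochhammer (real n + p) n / fact n"

definition takacs_pmf :: "real \<Rightarrow> real \<Rightarrow> nat \<Rightarrow> real" where
  "takacs_pmf p m n = takacs_nu p n * (m * (p + m) / (p + 2 * m)^2) ^ n
      * ((p + m) / (p + 2 * m)) powr p"

definition takacs_cond :: "real \<Rightarrow> real \<Rightarrow> nat \<Rightarrow> real" where
  "takacs_cond p m n = takacs_pmf p m n / (1 - takacs_pmf p m 0)"

definition b_fun :: "nat \<Rightarrow> real" where
  "b_fun n = 1 / sqrt (real n + 1) * (sqrt (1 + 1 / real n) - 1)"

end

theory Submission
  imports Defs
begin

lemma lim_R: "q > 0 \<Longrightarrow> p > 0 \<Longrightarrow> (\<lambda>n::nat. ((real n+2)/(real n+1))^2 * (q*(2*real n+p)*(2*real n+p+1)/((real n+p+1)*(real n+1)))) \<longlonglongrightarrow> 4*q"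
  for p q :: real
proof -
  assume q: "q>0" and p: "p>0"
  define e where "e = (\<lambda>n::nat. inverse (real n))"
  have e: "e \<longlonglongrightarrow> 0" unfolding e_def by (rule lim_inverse_n)
  have L: "(\<lambda>n. ((1+2*e n)/(1+e n))^2 * (q*(2+p*e n)*(2+(p+1)*e n)/((1+(p+1)*e n)*(1+e n)))) \<longlonglongrightarrow>
     ((1+2*0)/(1+0))^2 * (q*(2+p*0)*(2+(p+1)*0)/((1+(p+1)*0)*(1+0)))"
    by (intro tendsto_intros e) auto
  have ev: "eventually (\<lambda>n. ((1+2*e n)/(1+e n))^2 * (q*(2+p*e n)*(2+(p+1)*e n)/((1+(p+1)*e n)*(1+e n))) =
     ((real n+2)/(real n+1))^2 * (q*(2*real n+p)*(2*real n+p+1)/((real n+p+1)*(real n+1)))) sequentially"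
    using eventually_gt_at_top[of "0::nat"]
  proof eventually_elim
    case (elim n)
    then have n: "real n > 0" by simp
    have a1: "1+e n = (real n+1)/real n" and a2: "1+2*e n = (real n+2)/real n"
      and a3: "2+p*e n = (2*real n+p)/real n" and a4: "2+(p+1)*e n = (2*real n+p+1)/real n"
      and a5: "1+(p+1)*e n = (real n+p+1)/real n"
      unfolding e_def using n by (simp_all add: field_simps)
    have 1: "(1+2*e n)/(1+e n) = (real n+2)/(real n+1)" unfolding a1 a2 using n by simp
    have 2: "q*(2+p*e n)*(2+(p+1)*e n)/((1+(p+1)*e n)*(1+e n)) = q*(2*real n+p)*(2*real n+p+1)/((real n+p+1)*(real n+1))"
    proof -
      have g: "\<And>a b c d x::real. x \<noteq> 0 \<Longrightarrow> q*(a/x)*(b/x)/((c/x)*(d/x)) = q*a*b/(c*d)"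
        by (simp add: divide_simps)
      show ?thesis unfolding a1 a3 a4 a5 using n by (simp add: g)
    qed
    show ?case using 1 2 by simp
  qed
  show ?thesis using Lim_transform_eventually[OF L ev] by simp
qed

lemma nu_rec: "takacs_nu p (Suc n) = takacs_nu p n * ((2*real n+p)*(2*real n+p+1)/((real n+p+1)*(real n+1)))" if "p>0"
proof -
  have a: "pochhammer (real n+p) (Suc n) = pochhammer (real n + p) n * (2*real n+p)"
    by (simp add: pochhammer_Suc algebra_simps)
  have b: "pochhammer (real n+p) (Suc n) = (real n + p) * pochhammer (real n + p + 1) n"
    by (simp add: pochhammer_rec algebra_simps)
  have c: "pochhammer (real n+p+1) (Suc n) = pochhammer (real n + p+1) n * (2*real n+p+1)"
    by (simp add: pochhammer_Suc algebra_simps)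
  have np: "real n + p > 0" using that by simp
  have d: "pochhammer (real n+p+1) n = pochhammer (real n + p) n * (2*real n+p) / (real n + p)"
    using a b np by (simp add: field_simps)
  have "takacs_nu p (Suc n) = p / (real n + p + 1) * pochhammer (real n + p + 1) (Suc n) / fact (Suc n)"
    unfolding takacs_nu_def by (simp add: add_ac)
  also have "\<dots> = p / (real n + p + 1) * (pochhammer (real n + p) n * (2*real n+p) / (real n + p) * (2*real n+p+1)) / ((real n + 1) * fact n)"
    by (simp only: c d fact_Suc of_nat_mult) (simp add: add_ac)
  also have "\<dots> = takacs_nu p n * ((2*real n+p)*(2*real n+p+1)/((real n+p+1)*(real n+1)))"
    unfolding takacs_nu_def using np by (simp add: field_simps)
  finally show ?thesis .
qed

lemma nu_nonneg: "p > 0 \<Longrightarrow> takacs_nu p n \<ge> 0"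
  unfolding takacs_nu_def
  by (intro divide_nonneg_nonneg mult_nonneg_nonneg pochhammer_nonneg) auto

lemma b_lower: "n \<ge> 1 \<Longrightarrow> 1 / (3 * (real n + 1)^2) \<le> b_fun n"
proof -
  assume n1: "n \<ge> 1"
  then have n: "real n \<ge> 1" by simp
  have s1: "sqrt (real n + 1) \<le> real n + 1"
    using n by (intro real_le_lsqrt) (auto simp: power2_eq_square)
  have i1: "1 / (real n + 1) \<le> 1 / sqrt (real n + 1)"
    using s1 n by (intro divide_left_mono) auto
  have s2: "1 + 1/(3*real n) \<le> sqrt (1 + 1/real n)"
  proof (rule real_le_rsqrt)
    have "(1 + 1/(3*real n))^2 = 1 + 2/(3*real n) + 1/(9*real n^2)"
      using n by (simp add: power2_eq_square field_simps)
    also have "\<dots> \<le> 1 + 1/real n"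
      using n by (simp add: field_simps power2_eq_square)
    finally show "(1 + 1/(3*real n))^2 \<le> 1 + 1/real n" .
  qed
  have i2: "1 / (3*(real n + 1)) \<le> sqrt (1 + 1/real n) - 1"
  proof -
    have "1 / (3*(real n + 1)) \<le> 1/(3*real n)" using n by (intro divide_left_mono) auto
    then show ?thesis using s2 by linarith
  qed
  have "1 / (3 * (real n + 1)^2) = 1/(real n + 1) * (1 / (3*(real n + 1)))"
    by (simp add: power2_eq_square)
  also have "\<dots> \<le> 1 / sqrt (real n + 1) * (sqrt (1 + 1/real n) - 1)"
    using i1 i2 n by (intro mult_mono) auto
  finally show ?thesis unfolding b_fun_def .
qed

theorem mainTheorem5:
  fixes p m :: real
  assumes "p > 0" and "m > 0"
  shows "\<exists>C. \<forall>n::nat. n \<ge> 1 \<longrightarrow> takacs_cond p m n \<le> C * b_fun n"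
proof -
  note p = assms(1) and m = assms(2)
  define q where "q = m * (p + m) / (p + 2 * m)^2"
  define c where "c = ((p + m) / (p + 2 * m)) powr p"
  have q0: "q > 0" unfolding q_def using p m by simp
  have q4: "4 * q < 1"
  proof -
    have "4 * (m * (p + m)) < (p + 2*m)^2" using p by (simp add: power2_eq_square algebra_simps)
    then show ?thesis unfolding q_def using p m by (simp add: field_simps)
  qed
  have c0: "c > 0" unfolding c_def using p m by simp
  have c1: "c < 1"
  proof -
    have "((p + m) / (p + 2 * m)) powr p < 1 powr p"
      using p m by (intro powr_less_mono2) auto
    then show ?thesis unfolding c_def by simp
  qed
  have f0: "takacs_pmf p m 0 = c"
    unfolding takacs_pmf_def takacs_nu_def c_def using p by simp
  define R where "R = (\<lambda>n::nat. ((real n+2)/(real n+1))^2 * (q*(2*real n+p)*(2*real n+p+1)/((real n+p+1)*(real n+1))))"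
  define g where "g = (\<lambda>n::nat. (real n + 1)^2 * takacs_nu p n * q^n)"
  have g0: "g n \<ge> 0" for n unfolding g_def using nu_nonneg[OF p] q0 by simp
  have R0: "R n \<ge> 0" for n unfolding R_def using p q0 by simp
  have gS: "g (Suc n) = g n * R n" for n
  proof -
    have "g (Suc n) = (real n + 2)^2 * (takacs_nu p n * ((2*real n+p)*(2*real n+p+1)/((real n+p+1)*(real n+1)))) * (q * q^n)"
      unfolding g_def nu_rec[OF p] by (simp add: add_ac)
    also have "\<dots> = g n * R n"
    proof -
      have d1: "real n + p + 1 > 0" "real n + 1 > 0" using p by auto
      have k: "(real n+1)^2 * ((real n+2)/(real n+1))^2 = (real n+2)^2"
        using d1 by (simp add: power_divide)
      have "g n * R n = ((real n+1)^2 * ((real n+2)/(real n+1))^2) * takacs_nu p n * q^n * (q*(2*real n+p)*(2*real n+p+1)/((real n+p+1)*(real n+1)))"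
        unfolding g_def R_def by (simp only: mult_ac)
      also have "\<dots> = (real n+2)^2 * takacs_nu p n * q^n * (q*((2*real n+p)*(2*real n+p+1)/((real n+p+1)*(real n+1))))"
        unfolding k by (simp add: mult_ac)
      finally show ?thesis by (simp add: mult_ac)
    qed
    finally show ?thesis .
  qed
  have "eventually (\<lambda>n. R n < 1) sequentially"
    using order_tendstoD(2)[OF lim_R[OF q0 p] q4] unfolding R_def .
  then obtain N where N: "\<And>n. n \<ge> N \<Longrightarrow> R n < 1" by (auto simp: eventually_sequentially)
  have gN: "g n \<le> g N" if "n \<ge> N" for n
    using that
  proof (induction n rule: dec_induct)
    case base then show ?case by simp
  next
    case (step k)
    have "g (Suc k) = g k * R k" by (rule gS)
    also have "\<dots> \<le> g k * 1" using N[OF step(1)] g0[of k] by (intro mult_left_mono) auto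
    finally show ?case using step by simp
  qed
  define G where "G = Max (g ` {..N})"
  have gG: "g n \<le> G" for n
  proof (cases "n \<le> N")
    case True then show ?thesis unfolding G_def by (intro Max_ge) auto
  next
    case False
    then have "g n \<le> g N" using gN by simp
    also have "g N \<le> G" unfolding G_def by (intro Max_ge) auto
    finally show ?thesis .
  qed
  have G0: "G \<ge> 0" using gG[of 0] g0[of 0] by simp
  define C where "C = 3 * G * c / (1 - c)"
  have C0: "C \<ge> 0" unfolding C_def using G0 c0 c1 by simp
  show ?thesis
  proof (intro exI allI impI)
    fix n :: nat assume n: "n \<ge> 1"
    have np: "(real n + 1)^2 > 0" by simp
    have "takacs_cond p m n = g n / (real n + 1)^2 * c / (1 - c)"
      unfolding takacs_cond_def f0 unfolding takacs_pmf_def g_def q_def c_def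
      using np by (simp add: field_simps)
    also have "\<dots> \<le> G / (real n + 1)^2 * c / (1 - c)"
      using gG[of n] c0 c1 np by (intro divide_right_mono mult_right_mono) auto
    also have "\<dots> = C * (1 / (3 * (real n + 1)^2))"
      unfolding C_def using c1 by (simp add: field_simps)
    also have "\<dots> \<le> C * b_fun n"
      using b_lower[OF n] C0 by (intro mult_left_mono) auto
    finally show "takacs_cond p m n \<le> C * b_fun n" .
  qed
qed

end
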